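(* Let $G$ be a finite simple graph such that the cut polytope $\mathrm{Cut}(G)$ is compressed, and let $\Sigma$ be a special simplex in $\mathrm{Cut}(G)$. If $G$ has a triangle, then $\dim\Sigma=3$.
   Context: $G$ is a finite graph without loops or multiple edges on vertex set $[n]$ with edge set $\{e_1,\dots,e_m\}$. For $S\subset[n]$, $\delta_G(S)\in\{0,1\}^m$ has coordinate $1$ at edge $\{a,b\}$ iff $|S\cap\{a,b\}|=1$; the cut polytope $\mathrm{Cut}(G)\subset\mathbb{R}^m$ is the convex hull of all $\delta_G(S)$. An integral polytope is compressed if all of its reverse lexicographic (pulling) triangulations, using its lattice points, are unimodular. A $d$-simplex $\Sigma$ each of whose vertices is a vertex of a polytope $P$ is a special simplex in $P$ if each facet of $P$ contains exactly $d$ of the vertices of $\Sigma$. A triangle is a cycle of length $3$. *)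

theory Defs
  imports "HOL-Analysis.Analysis"
begin

(* A finite simple graph: vertices are the elements of the finite type 'v,
   edges are the elements of the finite type 'e, and ends e is the set of the
   two endpoints of edge e.  Injectivity of ends = no multiple edges;
   card 2 = no loops. *)
definition simple_graph :: "('e::finite \<Rightarrow> 'v::finite set) \<Rightarrow> bool" where
  "simple_graph ends \<longleftrightarrow> inj ends \<and> (\<forall>e. card (ends e) = 2)"

definition has_triangle :: "('e \<Rightarrow> 'v set) \<Rightarrow> bool" where
  "has_triangle ends \<longleftrightarrow> (\<exists>a b c. a \<noteq> b \<and> b \<noteq> c \<and> a \<noteq> c \<and>
      {a, b} \<in> range ends \<and> {b, c} \<in> range ends \<and> {a, c} \<in> range ends)"

definition cut_vector :: "('e::finite \<Rightarrow> 'v set) \<Rightarrow> 'v set \<Rightarrow> real^'e" where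
  "cut_vector ends S = (\<chi> e. if card (S \<inter> ends e) = 1 then 1 else 0)"

definition cut_polytope :: "('e::finite \<Rightarrow> 'v set) \<Rightarrow> (real^'e) set" where
  "cut_polytope ends = convex hull {cut_vector ends S | S. True}"

definition integral_point :: "real^'e::finite \<Rightarrow> bool" where
  "integral_point x \<longleftrightarrow> (\<forall>i. x $ i \<in> \<int>)"

definition lattice_points :: "(real^'e::finite) set \<Rightarrow> (real^'e) set" where
  "lattice_points P = {x \<in> P. integral_point x}"

definition integral_polytope :: "(real^'e::finite) set \<Rightarrow> bool" where
  "integral_polytope P \<longleftrightarrow> polytope P \<and> (\<forall>v. v extreme_point_of P \<longrightarrow> integral_point v)"

definition int_affine_span :: "(real^'e::finite) set \<Rightarrow> (real^'e) set" where
  "int_affine_span S = {y. \<exists>a. (\<forall>c\<in>S. a c \<in> \<int>) \<and> sum a S = 1 \<and> y = (\<Sum>c\<in>S. a c *\<^sub>R c)}"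

(* Pulling (reverse lexicographic) triangulation of a face Q of P with respect to a
   total order on the lattice points of P, given as a list ord (earlier = pulled first).
   Simplices are represented by their vertex sets. *)
inductive pulling :: "(real^'e::finite) list \<Rightarrow> (real^'e) set \<Rightarrow> (real^'e) set set \<Rightarrow> bool"
  for ord where
  point: "Q = {v} \<Longrightarrow> pulling ord Q {{v}}"
| pull: "\<lbrakk> aff_dim Q > 0; v \<in> Q; v = hd (filter (\<lambda>x. x \<in> Q) ord);
          \<forall>F. F facet_of Q \<and> v \<notin> F \<longrightarrow> pulling ord F (TF F) \<rbrakk>
         \<Longrightarrow> pulling ord Q (\<Union>F\<in>{F. F facet_of Q \<and> v \<notin> F}. insert v ` TF F)"

definition unimodular_in :: "(real^'e::finite) set \<Rightarrow> (real^'e) set \<Rightarrow> bool" where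
  "unimodular_in P C \<longleftrightarrow> \<not> affine_dependent C \<and> aff_dim (convex hull C) = aff_dim P \<and>
     int_affine_span (lattice_points P) \<subseteq> int_affine_span C"

definition compressed :: "(real^'e::finite) set \<Rightarrow> bool" where
  "compressed P \<longleftrightarrow> integral_polytope P \<and>
     (\<forall>ord T. distinct ord \<and> set ord = lattice_points P \<and> pulling ord P T \<longrightarrow>
        (\<forall>C\<in>T. unimodular_in P C))"

definition special_simplex :: "(real^'e::finite) set \<Rightarrow> int \<Rightarrow> (real^'e) set \<Rightarrow> bool" where
  "special_simplex P d \<Sigma> \<longleftrightarrow> (\<exists>C. \<not> affine_dependent C \<and> int (card C) = d + 1 \<and> \<Sigma> = convex hull C \<and>
      (\<forall>v\<in>C. v extreme_point_of P) \<and>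
      (\<forall>F. F facet_of P \<longrightarrow> int (card (F \<inter> C)) = d))"

end

theory Submission imports Defs begin

lemma cut_coord:
  assumes "ends e = {x,y}" "x \<noteq> y"
  shows "cut_vector ends S $ e = (if (x\<in>S) = (y\<in>S) then 0 else 1)"
  using assms unfolding cut_vector_def
  by (cases "x \<in> S"; cases "y \<in> S") (auto simp: Int_insert_right)

lemma ends_two:
  assumes "simple_graph ends" obtains x y where "ends e = {x,y}" "x \<noteq> y"
  using assms unfolding simple_graph_def by (meson card_2_iff)

definition flip :: "'v set \<Rightarrow> 'v \<Rightarrow> 'v set" where
  "flip S u = (if u \<in> S then S - {u} else insert u S)"

lemma mem_flip[simp]: "x \<in> flip S u \<longleftrightarrow> (x \<in> S) \<noteq> (x = u)"
  unfolding flip_def by auto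

lemma flip_id:
  assumes sg: "simple_graph ends" and "u \<noteq> v" "(u \<in> S) = (v \<in> S)"
  shows "cut_vector ends S = cut_vector ends (flip S u) + cut_vector ends (flip S v)
     - cut_vector ends (flip (flip S u) v) + cut_vector ends {} - cut_vector ends {u}
     - cut_vector ends {v} + cut_vector ends {u,v}"
proof (rule vec_eq_iff[THEN iffD2], rule allI)
  fix e
  obtain x y where xy: "ends e = {x,y}" "x \<noteq> y" using ends_two[OF sg] by blast
  show "cut_vector ends S $ e = (cut_vector ends (flip S u) + cut_vector ends (flip S v)
     - cut_vector ends (flip (flip S u) v) + cut_vector ends {} - cut_vector ends {u}
     - cut_vector ends {v} + cut_vector ends {u,v}) $ e"
    using assms(2,3) xy by (simp add: cut_coord[of ends e x y, OF xy]) (auto split: if_splits)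
qed

lemma aff7:
  assumes "p2 \<in> affine hull X" "p3 \<in> affine hull X" "p4 \<in> affine hull X" "p5 \<in> affine hull X"
    "p6 \<in> affine hull X" "p7 \<in> affine hull X" "p8 \<in> affine hull X"
  shows "p2 + p3 - p4 + p5 - p6 - p7 + p8 \<in> affine hull (X::('a::real_vector) set)"
proof -
  have A: "affine (affine hull X)" by simp
  have 1: "p2 + 1 *\<^sub>R (p3 - p4) \<in> affine hull X" by (rule mem_affine_3_minus[OF A]) (use assms in auto)
  have 2: "(p2 + 1 *\<^sub>R (p3 - p4)) + 1 *\<^sub>R (p5 - p6) \<in> affine hull X" by (rule mem_affine_3_minus[OF A 1]) (use assms in auto)
  have 3: "((p2 + 1 *\<^sub>R (p3 - p4)) + 1 *\<^sub>R (p5 - p6)) + 1 *\<^sub>R (p8 - p7) \<in> affine hull X" by (rule mem_affine_3_minus[OF A 2]) (use assms in auto)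
  show ?thesis using 3 by (simp add: algebra_simps)
qed


lemma facet_lemma:
  fixes ends :: "'e::finite \<Rightarrow> 'v set" and \<alpha> :: "real^'e"
  assumes le: "\<And>S. \<alpha> \<bullet> cut_vector ends S \<le> \<beta>"
   and lt: "\<alpha> \<bullet> cut_vector ends Sa < \<beta>" and eq: "\<alpha> \<bullet> cut_vector ends Sb = \<beta>"
   and sp: "\<And>S. cut_vector ends S \<in> affine hull (insert (cut_vector ends W) {cut_vector ends T | T. \<alpha> \<bullet> cut_vector ends T = \<beta>})"
  shows "(cut_polytope ends \<inter> {x. \<alpha> \<bullet> x = \<beta>}) facet_of cut_polytope ends"
proof -
  define V where "V = {cut_vector ends S | S. True}"
  define P where "P = cut_polytope ends"
  define F where "F = P \<inter> {x. \<alpha> \<bullet> x = \<beta>}"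
  have PV: "P = convex hull V" unfolding P_def V_def cut_polytope_def by simp
  have cP: "convex P" unfolding PV by simp
  have VP: "V \<subseteq> P" unfolding PV by (rule hull_subset)
  have "P \<subseteq> {x. \<alpha> \<bullet> x \<le> \<beta>}" unfolding PV
    by (rule hull_minimal) (auto simp: V_def le convex_halfspace_le)
  hence face: "F face_of P" unfolding F_def
    by (intro face_of_Int_supporting_hyperplane_le cP) auto
  have ne: "F \<noteq> {}" using eq VP unfolding F_def V_def by blast
  have neq: "F \<noteq> P" using lt VP unfolding F_def V_def by force
  have lt2: "aff_dim F < aff_dim P" by (rule face_of_aff_dim_lt[OF cP face neq])
  have Fv: "{cut_vector ends T | T. \<alpha> \<bullet> cut_vector ends T = \<beta>} \<subseteq> F"
    using VP unfolding F_def V_def by blast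
  have "V \<subseteq> affine hull (insert (cut_vector ends W) F)"
  proof
    fix x assume "x \<in> V"
    then obtain S where x: "x = cut_vector ends S" unfolding V_def by blast
    show "x \<in> affine hull (insert (cut_vector ends W) F)"
      using sp[of S] hull_mono[OF insert_mono[OF Fv]] x by blast
  qed
  hence "P \<subseteq> affine hull (insert (cut_vector ends W) F)" unfolding PV
    by (intro hull_minimal) (auto intro: affine_imp_convex)
  hence "aff_dim P \<le> aff_dim (insert (cut_vector ends W) F)"
    using aff_dim_subset aff_dim_affine_hull by metis
  also have "\<dots> \<le> aff_dim F + 1" by (simp add: aff_dim_insert)
  finally have "aff_dim F = aff_dim P - 1" using lt2 by simp
  thus ?thesis using face ne unfolding facet_of_def F_def P_def by simp
qed


lemma memH: "(\<alpha> \<bullet> cut_vector ends T = \<beta>) \<or> T = W \<Longrightarrow> cut_vector ends T \<in> affine hull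
   (insert (cut_vector ends W) {cut_vector ends T | T. \<alpha> \<bullet> cut_vector ends T = \<beta>})"
  by (auto intro: hull_inc)

locale tri =
  fixes ends :: "'e::finite \<Rightarrow> 'v::finite set" and a b c :: 'v and eab ebc eac :: 'e
  assumes sg: "simple_graph ends" and dab: "a \<noteq> b" and dbc: "b \<noteq> c" and dac: "a \<noteq> c"
  and eab: "ends eab = {a,b}" and ebc: "ends ebc = {b,c}" and eac: "ends eac = {a,c}"
begin

lemma edist: "eab \<noteq> ebc" "eab \<noteq> eac" "ebc \<noteq> eac"
  using eab ebc eac dab dbc dac by (auto simp: doubleton_eq_iff)

definition vec3 :: "real \<Rightarrow> real \<Rightarrow> real \<Rightarrow> real^'e" where
  "vec3 s1 s2 s3 = (\<chi> e. if e = eab then s1 else if e = ebc then s2 else if e = eac then s3 else 0)"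

lemma inner3: "vec3 s1 s2 s3 \<bullet> x = s1 * x$eab + s2 * x$ebc + s3 * x$eac"
proof -
  have "vec3 s1 s2 s3 \<bullet> x = (\<Sum>e\<in>UNIV. (if e = eab then s1 * x$eab else 0) + (if e = ebc then s2 * x$ebc else 0)
      + (if e = eac then s3 * x$eac else 0))"
    unfolding inner_vec_def vec3_def using edist by (intro sum.cong) auto
  also have "\<dots> = s1 * x$eab + s2 * x$ebc + s3 * x$eac"
    by (simp add: sum.distrib)
  finally show ?thesis .
qed

lemma cab: "cut_vector ends S $ eab = (if (a\<in>S) = (b\<in>S) then 0 else 1)"
  by (rule cut_coord[of ends eab a b, OF eab dab])
lemma cbc: "cut_vector ends S $ ebc = (if (b\<in>S) = (c\<in>S) then 0 else 1)"
  by (rule cut_coord[of ends ebc b c, OF ebc dbc])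
lemma cac: "cut_vector ends S $ eac = (if (a\<in>S) = (c\<in>S) then 0 else 1)"
  by (rule cut_coord[of ends eac a c, OF eac dac])

lemmas cs = inner3 cab cbc cac

lemma facet0: "(cut_polytope ends \<inter> {x. vec3 1 1 1 \<bullet> x = 2}) facet_of cut_polytope ends"
proof (rule facet_lemma[where Sa="{}" and Sb="{a}" and W="{}"])
  fix S
  show "vec3 1 1 1 \<bullet> cut_vector ends S \<le> 2" by (simp add: cs)
  show "cut_vector ends S \<in> affine hull (insert (cut_vector ends {}) {cut_vector ends T |T. vec3 1 1 1 \<bullet> cut_vector ends T = 2})"
  proof (cases "vec3 1 1 1 \<bullet> cut_vector ends S = 2")
    case True thus ?thesis by (auto intro: hull_inc)
  next
    case False
    hence "(a\<in>S) = (b\<in>S)" by (auto simp: cs split: if_splits)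
    note eq = flip_id[OF sg dab this]
    show ?thesis
      apply (subst eq)
      apply (rule aff7)
            subgoal by (rule memH, rule disjI1) (use False dab dbc dac in \<open>auto simp: cs split: if_splits\<close>)
           subgoal by (rule memH, rule disjI1) (use False dab dbc dac in \<open>auto simp: cs split: if_splits\<close>)
          subgoal by (rule memH, rule disjI1) (use False dab dbc dac in \<open>auto simp: cs split: if_splits\<close>)
         subgoal by (rule memH, rule disjI2) (simp)
        subgoal by (rule memH, rule disjI1) (use dab dbc dac in \<open>auto simp: cs\<close>)
       subgoal by (rule memH, rule disjI1) (use dab dbc dac in \<open>auto simp: cs\<close>)
      subgoal by (rule memH, rule disjI1) (use dab dbc dac in \<open>auto simp: cs\<close>)
      done
  qed
qed (use dab in \<open>auto simp: cs\<close>)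

lemma facetc: "(cut_polytope ends \<inter> {x. vec3 1 (-1) (-1) \<bullet> x = 0}) facet_of cut_polytope ends"
proof (rule facet_lemma[where Sa="{c}" and Sb="{}" and W="{a,b}"])
  fix S
  show "vec3 1 (-1) (-1) \<bullet> cut_vector ends S \<le> 0" by (simp add: cs)
  show "cut_vector ends S \<in> affine hull (insert (cut_vector ends {a,b}) {cut_vector ends T |T. vec3 1 (-1) (-1) \<bullet> cut_vector ends T = 0})"
  proof (cases "vec3 1 (-1) (-1) \<bullet> cut_vector ends S = 0")
    case True thus ?thesis by (auto intro: hull_inc)
  next
    case False
    hence "(a\<in>S) = (b\<in>S)" by (auto simp: cs split: if_splits)
    note eq = flip_id[OF sg dab this]
    show ?thesis
      apply (subst eq)
      apply (rule aff7)
            subgoal by (rule memH, rule disjI1) (use False dab dbc dac in \<open>auto simp: cs split: if_splits\<close>)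
           subgoal by (rule memH, rule disjI1) (use False dab dbc dac in \<open>auto simp: cs split: if_splits\<close>)
          subgoal by (rule memH, rule disjI1) (use False dab dbc dac in \<open>auto simp: cs split: if_splits\<close>)
         subgoal by (rule memH, rule disjI1) (use dab dbc dac in \<open>auto simp: cs\<close>)
        subgoal by (rule memH, rule disjI1) (use dab dbc dac in \<open>auto simp: cs\<close>)
       subgoal by (rule memH, rule disjI1) (use dab dbc dac in \<open>auto simp: cs\<close>)
      subgoal by (rule memH, rule disjI2) (simp)
      done
  qed
qed (use dac dbc in \<open>auto simp: cs\<close>)

lemma faceta: "(cut_polytope ends \<inter> {x. vec3 (-1) 1 (-1) \<bullet> x = 0}) facet_of cut_polytope ends"
proof (rule facet_lemma[where Sa="{a}" and Sb="{}" and W="{b,c}"])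
  fix S
  show "vec3 (-1) 1 (-1) \<bullet> cut_vector ends S \<le> 0" by (simp add: cs)
  show "cut_vector ends S \<in> affine hull (insert (cut_vector ends {b,c}) {cut_vector ends T |T. vec3 (-1) 1 (-1) \<bullet> cut_vector ends T = 0})"
  proof (cases "vec3 (-1) 1 (-1) \<bullet> cut_vector ends S = 0")
    case True thus ?thesis by (auto intro: hull_inc)
  next
    case False
    hence "(b\<in>S) = (c\<in>S)" by (auto simp: cs split: if_splits)
    note eq = flip_id[OF sg dbc this]
    show ?thesis
      apply (subst eq)
      apply (rule aff7)
      subgoal by (rule memH, rule disjI1) (use False dab dbc dac in \<open>auto simp: cs split: if_splits\<close>)
      subgoal by (rule memH, rule disjI1) (use False dab dbc dac in \<open>auto simp: cs split: if_splits\<close>)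
      subgoal by (rule memH, rule disjI1) (use False dab dbc dac in \<open>auto simp: cs split: if_splits\<close>)
      subgoal by (rule memH, rule disjI1) (use dab dbc dac in \<open>auto simp: cs\<close>)
      subgoal by (rule memH, rule disjI1) (use dab dbc dac in \<open>auto simp: cs\<close>)
      subgoal by (rule memH, rule disjI1) (use dab dbc dac in \<open>auto simp: cs\<close>)
      subgoal by (rule memH, rule disjI2) (simp)
      done
  qed
qed (use dab dac in \<open>auto simp: cs\<close>)

lemma facetb: "(cut_polytope ends \<inter> {x. vec3 (-1) (-1) 1 \<bullet> x = 0}) facet_of cut_polytope ends"
proof (rule facet_lemma[where Sa="{b}" and Sb="{}" and W="{a,c}"])
  fix S
  show "vec3 (-1) (-1) 1 \<bullet> cut_vector ends S \<le> 0" by (simp add: cs)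
  show "cut_vector ends S \<in> affine hull (insert (cut_vector ends {a,c}) {cut_vector ends T |T. vec3 (-1) (-1) 1 \<bullet> cut_vector ends T = 0})"
  proof (cases "vec3 (-1) (-1) 1 \<bullet> cut_vector ends S = 0")
    case True thus ?thesis by (auto intro: hull_inc)
  next
    case False
    hence "(a\<in>S) = (c\<in>S)" by (auto simp: cs split: if_splits)
    note eq = flip_id[OF sg dac this]
    show ?thesis
      apply (subst eq)
      apply (rule aff7)
      subgoal by (rule memH, rule disjI1) (use False dab dbc dac in \<open>auto simp: cs split: if_splits\<close>)
      subgoal by (rule memH, rule disjI1) (use False dab dbc dac in \<open>auto simp: cs split: if_splits\<close>)
      subgoal by (rule memH, rule disjI1) (use False dab dbc dac in \<open>auto simp: cs split: if_splits\<close>)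
      subgoal by (rule memH, rule disjI1) (use dab dbc dac in \<open>auto simp: cs\<close>)
      subgoal by (rule memH, rule disjI1) (use dab dbc dac in \<open>auto simp: cs\<close>)
      subgoal by (rule memH, rule disjI1) (use dab dbc dac in \<open>auto simp: cs\<close>)
      subgoal by (rule memH, rule disjI2) (simp)
      done
  qed
qed (use dab dbc in \<open>auto simp: cs\<close>)

end

context tri begin

definition al :: "nat \<Rightarrow> real^'e" where
  "al j = (if j = 0 then vec3 1 1 1 else if j = 1 then vec3 (-1) 1 (-1)
           else if j = 2 then vec3 (-1) (-1) 1 else vec3 1 (-1) (-1))"
definition be :: "nat \<Rightarrow> real" where "be j = (if j = 0 then 2 else 0)"
definition FF :: "nat \<Rightarrow> (real^'e) set" where
  "FF j = cut_polytope ends \<inter> {x. al j \<bullet> x = be j}"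

lemma FF_facet: "j < 4 \<Longrightarrow> FF j facet_of cut_polytope ends"
  using facet0 faceta facetb facetc
  by (auto simp: FF_def al_def be_def less_Suc_eq numeral_eq_Suc)

lemma sum4: "(\<Sum>j<(4::nat). f j) = f 0 + f 1 + f 2 + (f 3 :: nat)"
  by (simp add: numeral_eq_Suc)

lemma one_miss: "(\<Sum>j<4. if al j \<bullet> cut_vector ends S \<noteq> be j then 1 else 0) = (1::nat)"
  unfolding sum4 using dab dbc dac by (auto simp: al_def be_def cs)

lemma main:
  assumes "special_simplex (cut_polytope ends) d \<Sigma>"
  shows "aff_dim \<Sigma> = 3"
proof -
  define P where "P = cut_polytope ends"
  obtain C where ind: "\<not> affine_dependent C" and cC: "int (card C) = d + 1" and Sig: "\<Sigma> = convex hull C"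
    and ext: "\<forall>v\<in>C. v extreme_point_of P" and fac: "\<forall>F. F facet_of P \<longrightarrow> int (card (F \<inter> C)) = d"
    using assms unfolding special_simplex_def P_def by blast
  have fin: "finite C" using aff_independent_finite[OF ind] .
  have CV: "\<forall>v\<in>C. \<exists>S. v = cut_vector ends S"
    using ext extreme_point_of_convex_hull unfolding P_def cut_polytope_def by fastforce
  have CP: "C \<subseteq> P" using ext extreme_point_of_def by blast
  have miss: "(\<Sum>c\<in>C. if c \<notin> FF j then 1 else 0) = (1::nat)" if j: "j < 4" for j
  proof -
    have "int (card (FF j \<inter> C)) = d" using fac FF_facet[OF j] P_def by blast
    hence "card C = card (FF j \<inter> C) + 1" using cC by linarith
    moreover have "card C = card (FF j \<inter> C) + card {c\<in>C. c \<notin> FF j}"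
    proof -
      have "C = (FF j \<inter> C) \<union> {c\<in>C. c \<notin> FF j}" by blast
      moreover have "card ((FF j \<inter> C) \<union> {c\<in>C. c \<notin> FF j}) = card (FF j \<inter> C) + card {c\<in>C. c \<notin> FF j}"
        by (rule card_Un_disjoint) (use fin in auto)
      ultimately show ?thesis by metis
    qed
    ultimately have "card {c\<in>C. c \<notin> FF j} = 1" by linarith
    moreover have "card {c\<in>C. c \<notin> FF j} = (\<Sum>c\<in>C. if c \<notin> FF j then 1 else 0)"
      using sum.inter_filter[OF fin, of "\<lambda>_. 1::nat" "\<lambda>c. c \<notin> FF j"] by simp
    ultimately show ?thesis by simp
  qed
  have one: "(\<Sum>j<4. if c \<notin> FF j then 1 else 0) = (1::nat)" if c: "c \<in> C" for c
  proof -
    obtain S where S: "c = cut_vector ends S" using CV c by blast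
    have "\<And>j. (c \<notin> FF j) = (al j \<bullet> cut_vector ends S \<noteq> be j)"
      using CP c S unfolding FF_def P_def by blast
    thus ?thesis using one_miss[of S] by simp
  qed
  have "card C = (\<Sum>c\<in>C. (1::nat))" by simp
  also have "\<dots> = (\<Sum>c\<in>C. \<Sum>j<4. if c \<notin> FF j then 1 else 0)" using one by simp
  also have "\<dots> = (\<Sum>j<4. \<Sum>c\<in>C. if c \<notin> FF j then 1 else 0)" by (rule sum.swap)
  also have "\<dots> = (\<Sum>j<(4::nat). (1::nat))" using miss by simp
  finally have "card C = 4" by simp
  moreover have "aff_dim \<Sigma> = aff_dim C" unfolding Sig by (simp add: aff_dim_convex_hull)
  moreover have "int (card C) = aff_dim C + 1" by (rule aff_dim_affine_independent[OF ind])
  ultimately show ?thesis by simp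
qed

end
theorem lemma3p3:
  fixes ends :: "'e::finite \<Rightarrow> 'v::finite set" and \<Sigma> :: "(real^'e) set" and d :: int
  assumes "simple_graph ends"
    and "compressed (cut_polytope ends)"
    and "special_simplex (cut_polytope ends) d \<Sigma>"
    and "has_triangle ends"
  shows "aff_dim \<Sigma> = 3"
proof -
  obtain a b c where abc: "a \<noteq> b" "b \<noteq> c" "a \<noteq> c" "{a, b} \<in> range ends" "{b, c} \<in> range ends" "{a, c} \<in> range ends"
    using assms(4) unfolding has_triangle_def by blast
  then obtain eab ebc eac where "ends eab = {a,b}" "ends ebc = {b,c}" "ends eac = {a,c}" by (metis rangeE)
  then interpret tri ends a b c eab ebc eac using abc assms(1) by unfold_locales auto
  show ?thesis by (rule main[OF assms(3)])
qed

end
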